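(* Let $\{\tilde{\mathcal{T}}_n\}_{n\ge K}$ be a $K$-type Community Weighted Recursive Tree with type probabilities $p_1,\dots,p_K$ and positive weights $(\omega_{ij})$, and for $k\ge 0$ let $N_k(n)$ be the number of vertices of out-degree $k$ in $\tilde{\mathcal{T}}_n$. Then for each fixed $k$, $N_k(n)/n\to\tilde c_k$ in probability as $n\to\infty$, where $$\tilde c_k=\sum_{i=1}^K\frac{p_i}{1+\tilde r_i}\left(\frac{\tilde r_i}{1+\tilde r_i}\right)^k,\qquad \tilde r_i=\sum_{j=1}^K\frac{p_j\omega_{ji}}{\sum_{l=1}^K p_l\omega_{jl}}.$$
   Context: $K$-type Community Weighted Recursive Tree (CWRT): fix $K\ge 2$, a probability vector $(p_1,\dots,p_K)$ with $p_1=\max_i p_i>0$, and positive weights $\omega_{ij}$, $1\le i,j\le K$. The initial tree $\tilde{\mathcal{T}}_K$ is a uniform random recursive tree on vertices $\{1,\dots,K\}$ whose vertices are assigned types $1,\dots,K$ via a uniform random permutation (one vertex of each type). For $n>K$, vertex $n$ is added to $\tilde{\mathcal{T}}_{n-1}$: it is assigned type $i$ with probability $p_i$, and then, given type $i$, it attaches by an edge to each particular existing vertex of type $j$ with probability $\omega_{ij}/\sum_{l=1}^K n_l\omega_{il}$, where $n_l$ is the current number of type $l$ vertices. All random choices are independent. Edges are directed from parent (earlier vertex) to child; out-degree is the number of children. *)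

theory Defs
  imports "HOL-Probability.Probability"
begin

text \<open>Vertices are 1,2,...,n; types are 1,...,K. A tree state is a pair (ty, par):
  ty v is the type of vertex v, par v the parent of vertex v (par 1 = 0, the root
  has no parent). Only values on {1..n} are meaningful.\<close>

type_synonym cwrt_state = "(nat \<Rightarrow> nat) \<times> (nat \<Rightarrow> nat)"

fun urrt :: "nat \<Rightarrow> (nat \<Rightarrow> nat) pmf" where
  "urrt 0 = return_pmf (\<lambda>_. 0)"
| "urrt (Suc m) =
     (if m = 0 then return_pmf (\<lambda>_. 0)
      else do { par \<leftarrow> urrt m; v \<leftarrow> pmf_of_set {1..m}; return_pmf (par(Suc m := v)) })"

definition cwrt_init :: "nat \<Rightarrow> cwrt_state pmf" where
  "cwrt_init K = do { par \<leftarrow> urrt K; \<pi> \<leftarrow> pmf_of_set {\<pi>. \<pi> permutes {1..K}};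
                      return_pmf (\<pi>, par) }"

definition type_pmf :: "nat \<Rightarrow> (nat \<Rightarrow> real) \<Rightarrow> nat pmf" where
  "type_pmf K p = embed_pmf (\<lambda>i. if i \<in> {1..K} then p i else 0)"

definition attach_pmf ::
  "(nat \<Rightarrow> nat \<Rightarrow> real) \<Rightarrow> (nat \<Rightarrow> nat) \<Rightarrow> nat \<Rightarrow> nat \<Rightarrow> nat pmf" where
  "attach_pmf w ty n i = embed_pmf (\<lambda>v. if v \<in> {1..<n}
        then w i (ty v) / (\<Sum>u\<in>{1..<n}. w i (ty u)) else 0)"

definition cwrt_step ::
  "nat \<Rightarrow> (nat \<Rightarrow> real) \<Rightarrow> (nat \<Rightarrow> nat \<Rightarrow> real) \<Rightarrow> nat \<Rightarrow> cwrt_state \<Rightarrow> cwrt_state pmf" where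
  "cwrt_step K p w n s = do { i \<leftarrow> type_pmf K p; v \<leftarrow> attach_pmf w (fst s) n i;
                             return_pmf ((fst s)(n := i), (snd s)(n := v)) }"

fun cwrt :: "nat \<Rightarrow> (nat \<Rightarrow> real) \<Rightarrow> (nat \<Rightarrow> nat \<Rightarrow> real) \<Rightarrow> nat \<Rightarrow> cwrt_state pmf" where
  "cwrt K p w 0 = cwrt_init K"
| "cwrt K p w (Suc n) =
     (if Suc n \<le> K then cwrt_init K else cwrt K p w n \<bind> cwrt_step K p w (Suc n))"

definition out_degree :: "nat \<Rightarrow> cwrt_state \<Rightarrow> nat \<Rightarrow> nat" where
  "out_degree n s v = card {u \<in> {1..n}. snd s u = v}"

definition num_deg :: "nat \<Rightarrow> nat \<Rightarrow> cwrt_state \<Rightarrow> nat" where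
  "num_deg k n s = card {v \<in> {1..n}. out_degree n s v = k}"

definition r_tilde :: "nat \<Rightarrow> (nat \<Rightarrow> real) \<Rightarrow> (nat \<Rightarrow> nat \<Rightarrow> real) \<Rightarrow> nat \<Rightarrow> real" where
  "r_tilde K p w i = (\<Sum>j\<in>{1..K}. p j * w j i / (\<Sum>l\<in>{1..K}. p l * w j l))"

definition c_tilde :: "nat \<Rightarrow> (nat \<Rightarrow> real) \<Rightarrow> (nat \<Rightarrow> nat \<Rightarrow> real) \<Rightarrow> nat \<Rightarrow> real" where
  "c_tilde K p w k = (\<Sum>i\<in>{1..K}. p i / (1 + r_tilde K p w i)
                        * (r_tilde K p w i / (1 + r_tilde K p w i)) ^ k)"

end

theory Submission
  imports Defs
begin

lemma exp_bind_bdd: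
  fixes f :: "'b \<Rightarrow> real"
  assumes "\<And>x. \<bar>f x\<bar> \<le> B"
  shows "measure_pmf.expectation (M \<bind> N) f = measure_pmf.expectation M (\<lambda>x. measure_pmf.expectation (N x) f)"
  unfolding measure_pmf_bind
  apply (rule integral_bind[where K="count_space UNIV" and B=B and B'=1])
  using assms by (auto simp: measure_pmf.emeasure_space_1 prob_space_imp_subprob_space measure_pmf_in_subprob_space)

lemma int_bdd: "(\<And>x. \<bar>f x\<bar> \<le> (B::real)) \<Longrightarrow> integrable (measure_pmf M) f"
  by (rule measure_pmf.integrable_const_bound[where B=B]) auto

lemma set_urrt: "par \<in> set_pmf (urrt m) \<Longrightarrow> \<forall>u\<in>{1..m}. par u < u"
proof (induction m arbitrary: par)
  case 0 then show ?case by simp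
next
  case (Suc m)
  show ?case
  proof (cases "m = 0")
    case True then show ?thesis using Suc.prems by auto
  next
    case False
    with Suc.prems obtain par0 v where "par0 \<in> set_pmf (urrt m)" "v \<in> {1..m}" "par = par0(Suc m := v)"
      by (auto simp: set_pmf_of_set)
    with Suc.IH show ?thesis by auto
  qed
qed

locale cw =
  fixes K :: nat and p :: "nat \<Rightarrow> real" and w :: "nat \<Rightarrow> nat \<Rightarrow> real"
  assumes K2: "K \<ge> 2" and pnn: "\<forall>i\<in>{1..K}. p i \<ge> 0" and psum: "(\<Sum>i\<in>{1..K}. p i) = 1"
    and wpos: "\<forall>i\<in>{1..K}. \<forall>j\<in>{1..K}. w i j > 0"
begin

definition valid :: "nat \<Rightarrow> cwrt_state \<Rightarrow> bool" where
  "valid n s \<longleftrightarrow> (\<forall>u\<in>{1..n}. fst s u \<in> {1..K} \<and> snd s u < u)"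

definition Sw :: "nat \<Rightarrow> cwrt_state \<Rightarrow> nat \<Rightarrow> real" where
  "Sw n s i = (\<Sum>u\<in>{1..n}. w i (fst s u))"

definition upd :: "nat \<Rightarrow> cwrt_state \<Rightarrow> nat \<Rightarrow> nat \<Rightarrow> cwrt_state" where
  "upd n s i v = ((fst s)(Suc n := i), (snd s)(Suc n := v))"

lemma type_ok: "(\<integral>\<^sup>+x. ennreal (if x \<in> {1..K} then p x else 0) \<partial>count_space UNIV) = 1"
proof -
  have "(\<integral>\<^sup>+x. ennreal (if x \<in> {1..K} then p x else 0) \<partial>count_space UNIV)
     = (\<Sum>x\<in>{1..K}. ennreal (if x \<in> {1..K} then p x else 0))"
    by (rule nn_integral_count_space') auto
  also have "\<dots> = ennreal (\<Sum>x\<in>{1..K}. p x)"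
    using pnn by (subst sum_ennreal) auto
  finally show ?thesis using psum by simp
qed

lemma pmf_type: "pmf (type_pmf K p) i = (if i \<in> {1..K} then p i else 0)"
  unfolding type_pmf_def using pnn type_ok by (subst pmf_embed_pmf) auto

lemma set_type: "set_pmf (type_pmf K p) \<subseteq> {1..K}"
  using pmf_type by (auto simp: set_pmf_iff split: if_splits)

lemma wv: "valid n s \<Longrightarrow> i \<in> {1..K} \<Longrightarrow> u \<in> {1..n} \<Longrightarrow> w i (fst s u) > 0"
  using wpos by (auto simp: valid_def)

lemma Sw_pos: assumes "valid n s" "i \<in> {1..K}" "n \<ge> 1" shows "Sw n s i > 0"
  unfolding Sw_def using assms wpos by (intro sum_pos) (auto simp: valid_def)

lemma attach_ok:
  assumes "valid n s" "i \<in> {1..K}" "n \<ge> 1"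
  shows "(\<integral>\<^sup>+x. ennreal (if x \<in> {1..<Suc n} then w i (fst s x) / (\<Sum>u\<in>{1..<Suc n}. w i (fst s u)) else 0) \<partial>count_space UNIV) = 1"
proof -
  have S: "Sw n s i > 0" using Sw_pos assms by blast
  have "(\<integral>\<^sup>+x. ennreal (if x \<in> {1..<Suc n} then w i (fst s x) / (\<Sum>u\<in>{1..<Suc n}. w i (fst s u)) else 0) \<partial>count_space UNIV)
     = (\<Sum>x\<in>{1..n}. ennreal (if x \<in> {1..<Suc n} then w i (fst s x) / (\<Sum>u\<in>{1..<Suc n}. w i (fst s u)) else 0))"
    by (rule nn_integral_count_space') auto
  also have "\<dots> = ennreal (\<Sum>x\<in>{1..n}. w i (fst s x) / Sw n s i)"
    using assms S wv[OF assms(1,2)] by (subst sum_ennreal) (auto simp: Sw_def atLeastLessThanSuc_atLeastAtMost intro!: divide_nonneg_pos sum.cong less_imp_le)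
  also have "(\<Sum>x\<in>{1..n}. w i (fst s x) / Sw n s i) = 1"
    using S by (simp add: sum_divide_distrib[symmetric]) (simp add: Sw_def)
  finally show ?thesis by simp
qed

lemma pmf_attach:
  assumes "valid n s" "i \<in> {1..K}" "n \<ge> 1"
  shows "pmf (attach_pmf w (fst s) (Suc n) i) v = (if v \<in> {1..n} then w i (fst s v) / Sw n s i else 0)"
proof -
  have S: "Sw n s i > 0" using Sw_pos assms by blast
  show ?thesis
  unfolding attach_pmf_def
  apply (subst pmf_embed_pmf)
  using assms S attach_ok[OF assms] wv[OF assms(1,2)]
  by (auto simp: Sw_def atLeastLessThanSuc_atLeastAtMost intro!: divide_nonneg_pos less_imp_le)
qed

lemma set_attach:
  assumes "valid n s" "i \<in> {1..K}" "n \<ge> 1"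
  shows "set_pmf (attach_pmf w (fst s) (Suc n) i) \<subseteq> {1..n}"
  using pmf_attach[OF assms] by (auto simp: set_pmf_iff split: if_splits)

lemma step_exp:
  assumes "valid n s" "n \<ge> 1"
  shows "measure_pmf.expectation (cwrt_step K p w (Suc n) s) f
     = (\<Sum>i\<in>{1..K}. p i * (\<Sum>v\<in>{1..n}. w i (fst s v) / Sw n s i * f (upd n s i v)))"
proof -
  have fin: "finite (set_pmf (attach_pmf w (fst s) (Suc n) i \<bind> (\<lambda>v. return_pmf (g v))))" if "i \<in> {1..K}" for i and g :: "nat \<Rightarrow> cwrt_state"
    using set_attach[OF assms(1) that assms(2)] by (auto intro: finite_subset)
  show ?thesis
    unfolding cwrt_step_def
    apply (subst pmf_expectation_bind[of "{1..K}"])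
    using set_type fin apply auto[3]
    apply (rule sum.cong, rule refl)
    apply (subst pmf_expectation_bind[of "{1..n}"])
    using set_attach[OF assms(1) _ assms(2)] apply auto[3]
    using pmf_type pmf_attach[OF assms(1) _ assms(2)]
    by (auto simp: upd_def sum_distrib_left intro!: sum.cong)
qed

lemma valid_upd: "valid n s \<Longrightarrow> i \<in> {1..K} \<Longrightarrow> v \<in> {1..n} \<Longrightarrow> valid (Suc n) (upd n s i v)"
  by (auto simp: valid_def upd_def)

lemma valid_cwrt: "n \<ge> K \<Longrightarrow> s \<in> set_pmf (cwrt K p w n) \<Longrightarrow> valid n s"
proof (induction n arbitrary: s rule: dec_induct)
  case base
  have "cwrt K p w K = cwrt_init K" using K2 by (cases K) auto
  obtain par \<pi> where "par \<in> set_pmf (urrt K)" "\<pi> permutes {1..K}" "s = (\<pi>, par)"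
  proof -
    have ne: "{\<pi>. \<pi> permutes {1..K}} \<noteq> {}" using permutes_id by blast
    have fin: "finite {\<pi>. \<pi> permutes {1..K}}" by (rule finite_permutations) simp
    show ?thesis using that base ne fin by (auto simp: cwrt_init_def \<open>cwrt K p w K = cwrt_init K\<close>)
  qed
  then show ?case using set_urrt permutes_in_image by (fastforce simp: valid_def)
next
  case (step n)
  then obtain s0 where s0: "s0 \<in> set_pmf (cwrt K p w n)" "s \<in> set_pmf (cwrt_step K p w (Suc n) s0)" by auto
  have v: "valid n s0" using step s0 by auto
  have n1: "n \<ge> 1" using step K2 by auto
  from s0(2) obtain i v where "i \<in> set_pmf (type_pmf K p)" "v \<in> set_pmf (attach_pmf w (fst s0) (Suc n) i)"
    "s = upd n s0 i v" by (auto simp: cwrt_step_def upd_def)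
  then show ?case using valid_upd[OF v] set_type set_attach[OF v _ n1] by blast
qed

end

lemma card_sum: "finite S \<Longrightarrow> real (card {x\<in>S. P x}) = (\<Sum>x\<in>S. if P x then 1 else 0)"
  by (simp add: sum.If_cases Int_def)

context cw begin

definition cnt :: "nat \<Rightarrow> nat \<Rightarrow> cwrt_state \<Rightarrow> nat" where
  "cnt l n s = card {u\<in>{1..n}. fst s u = l}"
definition Nk :: "nat \<Rightarrow> nat \<Rightarrow> nat \<Rightarrow> cwrt_state \<Rightarrow> nat" where
  "Nk k j n s = card {u\<in>{1..n}. fst s u = j \<and> out_degree n s u = k}"
definition Np :: "nat \<Rightarrow> nat \<Rightarrow> nat \<Rightarrow> cwrt_state \<Rightarrow> nat" where
  "Np k j n s = card {u\<in>{1..n}. fst s u = j \<and> Suc (out_degree n s u) = k}"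

lemma cnt_le: "cnt l n s \<le> n"
  unfolding cnt_def by (rule order.trans[OF card_mono[of "{1..n}"]]) auto
lemma Nk_le: "Nk k j n s \<le> n"
  unfolding Nk_def by (rule order.trans[OF card_mono[of "{1..n}"]]) auto
lemma Np_le: "Np k j n s \<le> n"
  unfolding Np_def by (rule order.trans[OF card_mono[of "{1..n}"]]) auto
lemma Np_0: "Np 0 j n s = 0" by (simp add: Np_def)
lemma Np_Suc: "Np (Suc k) j n s = Nk k j n s" by (simp add: Np_def Nk_def)

lemma deg_upd:
  assumes "valid n s" "v \<in> {1..n}" "u \<in> {1..n}"
  shows "out_degree (Suc n) (upd n s i v) u = out_degree n s u + (if u = v then 1 else 0)"
proof -
  have "{x\<in>{1..Suc n}. snd (upd n s i v) x = u} = {x\<in>{1..n}. snd s x = u} \<union> (if v = u then {Suc n} else {})"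
    using assms by (auto simp: upd_def)
  then show ?thesis unfolding out_degree_def by (auto simp: card_insert_if)
qed

lemma cnt_upd: "real (cnt l (Suc n) (upd n s i v)) = real (cnt l n s) + (if i = l then 1 else 0)"
proof -
  have "real (cnt l (Suc n) (upd n s i v)) = (\<Sum>x\<in>{1..Suc n}. if fst (upd n s i v) x = l then 1 else 0)"
    unfolding cnt_def by (rule card_sum) simp
  also have "\<dots> = (\<Sum>x\<in>{1..n}. if fst s x = l then 1 else 0) + (if i = l then 1 else 0)"
    by (simp add: upd_def)
  also have "(\<Sum>x\<in>{1..n}. if fst s x = l then 1 else 0) = real (cnt l n s)"
    unfolding cnt_def by (rule card_sum[symmetric]) simp
  finally show ?thesis .
qed

lemma Nk_upd:
  assumes "valid n s" "v \<in> {1..n}"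
  shows "real (Nk k j (Suc n) (upd n s i v)) = real (Nk k j n s)
     - (if fst s v = j \<and> out_degree n s v = k then 1 else 0)
     + (if fst s v = j \<and> Suc (out_degree n s v) = k then 1 else 0)
     + (if i = j \<and> k = 0 then 1 else 0)"
proof -
  let ?s' = "upd n s i v"
  let ?f = "\<lambda>x. if fst s x = j \<and> out_degree n s x = k then 1 else (0::real)"
  let ?g = "\<lambda>x. if fst ?s' x = j \<and> out_degree (Suc n) ?s' x = k then 1 else (0::real)"
  have dn: "out_degree (Suc n) ?s' (Suc n) = 0"
  proof -
    have "snd ?s' x \<noteq> Suc n" if x: "x \<in> {1..Suc n}" for x
    proof (cases "x = Suc n")
      case True then show ?thesis using assms(2) by (simp add: upd_def)
    next
      case False
      then have "x \<in> {1..n}" using x by auto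
      then have "snd s x < x" using assms(1) by (simp add: valid_def)
      then show ?thesis using False \<open>x \<in> {1..n}\<close> by (simp add: upd_def)
    qed
    then have "{x\<in>{1..Suc n}. snd ?s' x = Suc n} = {}" by blast
    then show ?thesis by (simp add: out_degree_def)
  qed
  have "real (Nk k j (Suc n) ?s') = (\<Sum>x\<in>{1..Suc n}. ?g x)"
    unfolding Nk_def by (rule card_sum) simp
  also have "\<dots> = (\<Sum>x\<in>{1..n}. ?g x) + (if i = j \<and> k = 0 then 1 else 0)"
    using dn by (simp add: upd_def)
  also have "(\<Sum>x\<in>{1..n}. ?g x) = ?g v + (\<Sum>x\<in>{1..n}-{v}. ?g x)"
    using assms by (subst sum.remove) auto
  also have "(\<Sum>x\<in>{1..n}-{v}. ?g x) = (\<Sum>x\<in>{1..n}-{v}. ?f x)"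
    using assms deg_upd by (intro sum.cong) (auto simp: upd_def)
  also have "\<dots> = (\<Sum>x\<in>{1..n}. ?f x) - ?f v"
    using assms by (subst sum.remove[of _ v]) auto
  also have "(\<Sum>x\<in>{1..n}. ?f x) = real (Nk k j n s)"
    unfolding Nk_def by (rule card_sum[symmetric]) simp
  also have "?g v = (if fst s v = j \<and> Suc (out_degree n s v) = k then 1 else 0)"
    using assms deg_upd[OF assms assms(2)] by (auto simp: upd_def)
  finally show ?thesis by simp
qed

lemma sum_q:
  assumes "valid n s" "i \<in> {1..K}" "n \<ge> 1"
  shows "(\<Sum>v\<in>{1..n}. w i (fst s v) / Sw n s i * (if fst s v = j \<and> P v then 1 else 0))
     = w i j / Sw n s i * card {v\<in>{1..n}. fst s v = j \<and> P v}"
proof -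
  have "(\<Sum>v\<in>{1..n}. w i (fst s v) / Sw n s i * (if fst s v = j \<and> P v then 1 else 0))
     = (\<Sum>v\<in>{1..n}. w i j / Sw n s i * (if fst s v = j \<and> P v then 1 else 0))"
    by (intro sum.cong) auto
  also have "\<dots> = w i j / Sw n s i * (\<Sum>v\<in>{1..n}. (if fst s v = j \<and> P v then 1 else 0))"
    by (rule sum_distrib_left[symmetric])
  also have "(\<Sum>v\<in>{1..n}. (if fst s v = j \<and> P v then 1 else 0)) = real (card {v\<in>{1..n}. fst s v = j \<and> P v})"
    by (rule card_sum[symmetric]) simp
  finally show ?thesis .
qed

lemma sum_q1:
  assumes "valid n s" "i \<in> {1..K}" "n \<ge> 1"
  shows "(\<Sum>v\<in>{1..n}. w i (fst s v) / Sw n s i) = 1"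
  using Sw_pos[OF assms] by (simp add: sum_divide_distrib[symmetric]) (simp add: Sw_def)

definition gg :: "nat \<Rightarrow> nat \<Rightarrow> cwrt_state \<Rightarrow> real" where
  "gg j n s = (\<Sum>i\<in>{1..K}. p i * w i j / Sw n s i)"

lemma exp_Nk:
  assumes "valid n s" "n \<ge> 1" "j \<in> {1..K}"
  shows "measure_pmf.expectation (cwrt_step K p w (Suc n) s) (\<lambda>s'. real (Nk k j (Suc n) s'))
     = real (Nk k j n s) + (if k = 0 then p j else 0) + gg j n s * (real (Np k j n s) - real (Nk k j n s))"
proof -
  have "measure_pmf.expectation (cwrt_step K p w (Suc n) s) (\<lambda>s'. real (Nk k j (Suc n) s'))
    = (\<Sum>i\<in>{1..K}. p i * (\<Sum>v\<in>{1..n}. w i (fst s v) / Sw n s i * real (Nk k j (Suc n) (upd n s i v))))"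
    by (rule step_exp[OF assms(1,2)])
  also have "\<dots> = (\<Sum>i\<in>{1..K}. p i * (real (Nk k j n s) - w i j / Sw n s i * Nk k j n s
      + w i j / Sw n s i * Np k j n s + (if i = j \<and> k = 0 then 1 else 0)))"
  proof (intro sum.cong refl arg_cong2[where f="(*)"])
    fix i assume i: "i \<in> {1..K}"
    let ?q = "\<lambda>v. w i (fst s v) / Sw n s i"
    let ?I1 = "\<lambda>v. (if fst s v = j \<and> out_degree n s v = k then 1 else (0::real))"
    let ?I2 = "\<lambda>v. (if fst s v = j \<and> Suc (out_degree n s v) = k then 1 else (0::real))"
    let ?I3 = "(if i = j \<and> k = 0 then 1 else (0::real))"
    have "(\<Sum>v\<in>{1..n}. w i (fst s v) / Sw n s i * real (Nk k j (Suc n) (upd n s i v)))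
      = (\<Sum>v\<in>{1..n}. ?q v * real (Nk k j n s) - ?q v * ?I1 v + ?q v * ?I2 v + ?q v * ?I3)"
    proof (rule sum.cong[OF refl])
      fix v assume v: "v \<in> {1..n}"
      show "w i (fst s v) / Sw n s i * real (Nk k j (Suc n) (upd n s i v)) =
        ?q v * real (Nk k j n s) - ?q v * ?I1 v + ?q v * ?I2 v + ?q v * ?I3"
        unfolding Nk_upd[OF assms(1) v] by (simp only: ring_distribs)
    qed
    also have "\<dots> = (\<Sum>v\<in>{1..n}. ?q v) * real (Nk k j n s) - (\<Sum>v\<in>{1..n}. ?q v * ?I1 v)
       + (\<Sum>v\<in>{1..n}. ?q v * ?I2 v) + (\<Sum>v\<in>{1..n}. ?q v) * ?I3"
      by (simp only: sum.distrib sum_subtractf sum_distrib_right)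
    also have "(\<Sum>v\<in>{1..n}. ?q v * ?I1 v) = w i j / Sw n s i * Nk k j n s"
      unfolding Nk_def by (rule sum_q[OF assms(1) i assms(2)])
    also have "(\<Sum>v\<in>{1..n}. ?q v * ?I2 v) = w i j / Sw n s i * Np k j n s"
      unfolding Np_def by (rule sum_q[OF assms(1) i assms(2)])
    also have "(\<Sum>v\<in>{1..n}. ?q v) = 1" by (rule sum_q1[OF assms(1) i assms(2)])
    finally show "(\<Sum>v\<in>{1..n}. w i (fst s v) / Sw n s i * real (Nk k j (Suc n) (upd n s i v))) =
        real (Nk k j n s) - w i j / Sw n s i * Nk k j n s
      + w i j / Sw n s i * Np k j n s + (if i = j \<and> k = 0 then 1 else 0)" by simp
  qed
  also have "\<dots> = real (Nk k j n s) * (\<Sum>i\<in>{1..K}. p i) + (\<Sum>i\<in>{1..K}. p i * (if i = j \<and> k = 0 then 1 else 0))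
       + gg j n s * (real (Np k j n s) - real (Nk k j n s))"
    by (simp add: gg_def algebra_simps sum.distrib sum_subtractf sum_distrib_left sum_distrib_right)
  also have "(\<Sum>i\<in>{1..K}. p i * (if i = j \<and> k = 0 then 1 else 0)) = (if k = 0 then p j else 0)"
    using assms(3) by (simp add: sum.delta' if_distrib[of "(*) _"] cong: if_cong)
  finally show ?thesis using psum by simp
qed

lemma exp_cnt:
  assumes "valid n s" "n \<ge> 1" "l \<in> {1..K}"
  shows "measure_pmf.expectation (cwrt_step K p w (Suc n) s) (\<lambda>s'. real (cnt l (Suc n) s'))
     = real (cnt l n s) + p l"
proof -
  have "measure_pmf.expectation (cwrt_step K p w (Suc n) s) (\<lambda>s'. real (cnt l (Suc n) s'))
    = (\<Sum>i\<in>{1..K}. p i * (\<Sum>v\<in>{1..n}. w i (fst s v) / Sw n s i * real (cnt l (Suc n) (upd n s i v))))"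
    by (rule step_exp[OF assms(1,2)])
  also have "\<dots> = (\<Sum>i\<in>{1..K}. p i * (real (cnt l n s) + (if i = l then 1 else 0)))"
  proof (intro sum.cong refl arg_cong2[where f="(*)"])
    fix i assume i: "i \<in> {1..K}"
    show "(\<Sum>v\<in>{1..n}. w i (fst s v) / Sw n s i * real (cnt l (Suc n) (upd n s i v)))
       = real (cnt l n s) + (if i = l then 1 else 0)"
    proof -
      have "(\<Sum>v\<in>{1..n}. w i (fst s v) / Sw n s i * real (cnt l (Suc n) (upd n s i v)))
        = (\<Sum>v\<in>{1..n}. w i (fst s v) / Sw n s i) * (real (cnt l n s) + (if i = l then 1 else 0))"
        by (simp only: cnt_upd sum_distrib_right)
      then show ?thesis using sum_q1[OF assms(1) i assms(2)] by simp
    qed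
  qed
  also have "\<dots> = real (cnt l n s) * (\<Sum>i\<in>{1..K}. p i) + (\<Sum>i\<in>{1..K}. p i * (if i = l then 1 else 0))"
    by (simp add: algebra_simps sum.distrib sum_distrib_left sum_distrib_right)
  also have "(\<Sum>i\<in>{1..K}. p i * (if i = l then 1 else 0)) = p l"
    using assms(3) by (simp add: if_distrib[of "(*) _"] cong: if_cong)
  finally show ?thesis using psum by simp
qed

lemma set_step:
  assumes "valid n s" "n \<ge> 1" "s' \<in> set_pmf (cwrt_step K p w (Suc n) s)"
  shows "\<exists>i\<in>{1..K}. \<exists>v\<in>{1..n}. s' = upd n s i v"
proof -
  from assms(3) obtain i v where i: "i \<in> set_pmf (type_pmf K p)"
    and v: "v \<in> set_pmf (attach_pmf w (fst s) (Suc n) i)" and s': "s' = upd n s i v"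
    by (auto simp: cwrt_step_def upd_def)
  have "i \<in> {1..K}" using i set_type by blast
  moreover have "v \<in> {1..n}" using set_attach[OF assms(1) \<open>i \<in> {1..K}\<close> assms(2)] v by blast
  ultimately show ?thesis using s' by blast
qed

end

lemma exp_const: "measure_pmf.expectation M (\<lambda>x. c) = (c::real)"
  by simp

lemma exp_abs_le: "(\<And>x. \<bar>f x\<bar> \<le> (B::real)) \<Longrightarrow> \<bar>measure_pmf.expectation M f\<bar> \<le> B"
proof -
  assume b: "\<And>x. \<bar>f x\<bar> \<le> B"
  have B0: "0 \<le> B" using b[of undefined] by linarith
  have "\<bar>measure_pmf.expectation M f\<bar> \<le> measure_pmf.expectation M (\<lambda>x. \<bar>f x\<bar>)"
    by (rule integral_abs_bound)
  also have "\<dots> \<le> measure_pmf.expectation M (\<lambda>x. B)"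
    using b B0 by (intro integral_mono int_bdd[of _ B]) auto
  finally show ?thesis using B0 by simp
qed

lemma quad:
  fixes X :: "'a \<Rightarrow> real"
  assumes B: "\<And>x. \<bar>X x\<bar> \<le> B" and near: "\<And>x. x \<in> set_pmf M \<Longrightarrow> \<bar>X x - a\<bar> \<le> 2"
  shows "measure_pmf.expectation M (\<lambda>x. (X x)\<^sup>2) \<le> a\<^sup>2 + 2*a*(measure_pmf.expectation M X - a) + 4"
proof -
  have iX: "integrable M X" by (rule int_bdd[OF B])
  have bY: "\<bar>(X x - a)\<^sup>2\<bar> \<le> (B + \<bar>a\<bar>)\<^sup>2" for x
  proof -
    have "\<bar>X x - a\<bar> \<le> B + \<bar>a\<bar>" using B[of x] by linarith
    then have "\<bar>X x - a\<bar>\<^sup>2 \<le> (B + \<bar>a\<bar>)\<^sup>2" by (intro power_mono) auto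
    then show ?thesis by simp
  qed
  have iY: "integrable M (\<lambda>x. (X x - a)\<^sup>2)" by (rule int_bdd[OF bY])
  have eq: "(\<lambda>x. (X x)\<^sup>2) = (\<lambda>x. a\<^sup>2 + 2*a*(X x - a) + (X x - a)\<^sup>2)"
    by (auto simp: power2_eq_square algebra_simps)
  have "measure_pmf.expectation M (\<lambda>x. (X x)\<^sup>2)
      = a\<^sup>2 + 2*a*(measure_pmf.expectation M X - a) + measure_pmf.expectation M (\<lambda>x. (X x - a)\<^sup>2)"
  proof -
    have i1: "integrable M (\<lambda>x. 2*a*(X x - a))" using iX by auto
    have i2: "integrable M (\<lambda>x. a\<^sup>2 + 2*a*(X x - a))" using i1 by auto
    have "measure_pmf.expectation M (\<lambda>x. a\<^sup>2 + 2*a*(X x - a) + (X x - a)\<^sup>2)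
       = measure_pmf.expectation M (\<lambda>x. a\<^sup>2 + 2*a*(X x - a)) + measure_pmf.expectation M (\<lambda>x. (X x - a)\<^sup>2)"
      by (rule Bochner_Integration.integral_add[OF i2 iY])
    moreover have "measure_pmf.expectation M (\<lambda>x. a\<^sup>2 + 2*a*(X x - a))
       = measure_pmf.expectation M (\<lambda>x. a\<^sup>2) + measure_pmf.expectation M (\<lambda>x. 2*a*(X x - a))"
      by (rule Bochner_Integration.integral_add[OF _ i1]) simp
    moreover have "measure_pmf.expectation M (\<lambda>x. 2*a*(X x - a)) = 2*a*measure_pmf.expectation M (\<lambda>x. X x - a)"
      by (rule integral_mult_right_zero)
    moreover have "measure_pmf.expectation M (\<lambda>x. X x - a) = measure_pmf.expectation M X - a"
      using iX by (subst Bochner_Integration.integral_diff) auto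
    ultimately show ?thesis unfolding eq by simp
  qed
  also have "measure_pmf.expectation M (\<lambda>x. (X x - a)\<^sup>2) \<le> measure_pmf.expectation M (\<lambda>x. 4)"
  proof (rule integral_mono_AE[OF iY])
    show "integrable (measure_pmf M) (\<lambda>x. 4::real)" by simp
    show "AE x in measure_pmf M. (X x - a)\<^sup>2 \<le> 4"
    proof (rule AE_pmfI)
      fix x assume "x \<in> set_pmf M"
      then have "\<bar>X x - a\<bar> \<le> 2" by (rule near)
      then have "\<bar>X x - a\<bar>\<^sup>2 \<le> 2\<^sup>2" by (intro power_mono) auto
      then show "(X x - a)\<^sup>2 \<le> 4" by simp
    qed
  qed
  finally show ?thesis by simp
qed

context cw begin

definition "rr j = r_tilde K p w j"
definition "cc k j = p j / (1 + rr j) * (rr j / (1 + rr j)) ^ k"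
definition "ccp k j = (if k = 0 then 0 else cc (k - 1) j)"
definition "D k j n s = real (Nk k j n s) - cc k j * real n"
definition "Dp k j n s = real (Np k j n s) - ccp k j * real n"
definition "Z l n s = real (cnt l n s) - p l * real n"
definition "sb i = (\<Sum>l\<in>{1..K}. p l * w i l)"
definition "wmin = Min ((\<lambda>(a,b). w a b) ` ({1..K}\<times>{1..K}))"
definition "wmax = Max ((\<lambda>(a,b). w a b) ` ({1..K}\<times>{1..K}))"
definition "AA = wmax\<^sup>2 / wmin\<^sup>2"

lemma p_le1: "i \<in> {1..K} \<Longrightarrow> p i \<le> 1"
  using member_le_sum[of i "{1..K}" p] pnn psum by auto

lemma w_bounds: assumes "a \<in> {1..K}" "b \<in> {1..K}" shows "wmin \<le> w a b" "w a b \<le> wmax"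
  unfolding wmin_def wmax_def using assms
  by (auto intro!: Min_le Max_ge simp: image_iff)

lemma wmin_pos: "wmin > 0"
proof -
  have ne: "(\<lambda>(a,b). w a b) ` ({1..K}\<times>{1..K}) \<noteq> {}" using K2 by auto
  show ?thesis unfolding wmin_def using wpos ne by (subst Min_gr_iff) auto
qed

lemma wmin_le_wmax: "wmin \<le> wmax"
  using w_bounds[of 1 1] K2 by auto

lemma sb_bounds: assumes "i \<in> {1..K}" shows "wmin \<le> sb i" "sb i \<le> wmax"
proof -
  have "(\<Sum>l\<in>{1..K}. p l * wmin) \<le> sb i" unfolding sb_def
    using pnn w_bounds[OF assms] by (intro sum_mono mult_left_mono) auto
  then show "wmin \<le> sb i" using psum by (simp add: sum_distrib_right[symmetric])
  have "sb i \<le> (\<Sum>l\<in>{1..K}. p l * wmax)" unfolding sb_def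
    using pnn w_bounds[OF assms] by (intro sum_mono mult_left_mono) auto
  then show "sb i \<le> wmax" using psum by (simp add: sum_distrib_right[symmetric])
qed

lemma rr_eq: "rr j = (\<Sum>i\<in>{1..K}. p i * w i j / sb i)"
  by (simp add: rr_def r_tilde_def sb_def)

lemma rr_nn: assumes "j \<in> {1..K}" shows "rr j \<ge> 0"
  unfolding rr_eq using pnn wpos assms sb_bounds(1) wmin_pos
  by (intro sum_nonneg divide_nonneg_pos mult_nonneg_nonneg) (auto intro: less_imp_le less_le_trans)

lemma cc_bounds: assumes "j \<in> {1..K}" shows "0 \<le> cc k j" "cc k j \<le> 1"
proof -
  have r: "rr j \<ge> 0" by (rule rr_nn[OF assms])
  have q: "0 \<le> rr j / (1 + rr j)" "rr j / (1 + rr j) \<le> 1" using r by auto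
  have pj: "0 \<le> p j" "p j \<le> 1" using pnn assms p_le1 by auto
  show "0 \<le> cc k j" unfolding cc_def using q pj r by auto
  have "p j / (1 + rr j) \<le> 1" using pj r by (simp add: divide_le_eq)
  moreover have "(rr j / (1 + rr j)) ^ k \<le> 1" using q by (simp add: power_le_one)
  ultimately show "cc k j \<le> 1" unfolding cc_def using q pj r
    by (meson divide_nonneg_nonneg dual_order.trans le_add_same_cancel1 mult_left_le zero_le_power)
qed

lemma cc_rec: assumes "j \<in> {1..K}"
  shows "cc k j * (1 + rr j) = (if k = 0 then p j else 0) + rr j * ccp k j"
proof -
  have r: "1 + rr j > 0" using rr_nn[OF assms] by linarith
  show ?thesis
  proof (cases k)
    case 0 then show ?thesis using r by (simp add: cc_def ccp_def)
  next
    case (Suc m)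
    have q: "rr j / (1 + rr j) * (1 + rr j) = rr j" using r by simp
    have "cc k j * (1 + rr j) = p j / (1 + rr j) * (rr j / (1 + rr j)) ^ m * (rr j / (1 + rr j) * (1 + rr j))"
      unfolding cc_def Suc power_Suc by (simp only: mult_ac)
    also have "\<dots> = rr j * cc m j" unfolding q cc_def by (simp only: mult_ac)
    finally show ?thesis using Suc by (simp add: ccp_def)
  qed
qed

lemma Sw_cnt: assumes "valid n s" shows "Sw n s i = (\<Sum>l\<in>{1..K}. w i l * real (cnt l n s))"
proof -
  have "Sw n s i = (\<Sum>l\<in>{1..K}. \<Sum>u\<in>{u\<in>{1..n}. fst s u = l}. w i (fst s u))"
    unfolding Sw_def using assms by (subst sum.group) (auto simp: valid_def)
  also have "\<dots> = (\<Sum>l\<in>{1..K}. w i l * real (cnt l n s))"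
    by (intro sum.cong refl) (simp add: cnt_def)
  finally show ?thesis .
qed

lemma Sw_lower: assumes "valid n s" "i \<in> {1..K}" shows "Sw n s i \<ge> real n * wmin"
proof -
  have "(\<Sum>u\<in>{1..n}. wmin) \<le> Sw n s i"
    unfolding Sw_def using assms w_bounds(1) by (intro sum_mono) (auto simp: valid_def)
  then show ?thesis by simp
qed

lemma Sw_dev: assumes "valid n s" "i \<in> {1..K}"
  shows "\<bar>Sw n s i - real n * sb i\<bar> \<le> wmax * (\<Sum>l\<in>{1..K}. \<bar>Z l n s\<bar>)"
proof -
  have "Sw n s i - real n * sb i = (\<Sum>l\<in>{1..K}. w i l * Z l n s)"
    unfolding Sw_cnt[OF assms(1)] sb_def Z_def
    by (simp add: sum_distrib_left sum_subtractf[symmetric] algebra_simps)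
  also have "\<bar>\<dots>\<bar> \<le> (\<Sum>l\<in>{1..K}. \<bar>w i l * Z l n s\<bar>)" by (rule sum_abs)
  also have "\<dots> \<le> (\<Sum>l\<in>{1..K}. wmax * \<bar>Z l n s\<bar>)"
  proof (intro sum_mono)
    fix l assume l: "l \<in> {1..K}"
    have "0 < w i l" using wpos assms(2) l by blast
    then have "\<bar>w i l\<bar> \<le> wmax" using w_bounds(2)[OF assms(2) l] by simp
    then show "\<bar>w i l * Z l n s\<bar> \<le> wmax * \<bar>Z l n s\<bar>" by (simp add: abs_mult mult_right_mono)
  qed
  finally show ?thesis by (simp add: sum_distrib_left)
qed

end

lemma amgm: fixes x y c :: real assumes "0 < c" shows "2 * x * y \<le> x\<^sup>2 / c + c * y\<^sup>2"
proof -
  have "0 \<le> (x - c * y)\<^sup>2 / c" using assms by simp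
  also have "(x - c * y)\<^sup>2 / c = x\<^sup>2 / c - 2 * x * y + c * y\<^sup>2"
    using assms by (simp add: power2_eq_square field_simps)
  finally show ?thesis by simp
qed

lemma inv_diff: fixes x y :: real shows "x \<noteq> 0 \<Longrightarrow> y \<noteq> 0 \<Longrightarrow> 1 / x - 1 / y = (y - x) / (x * y)"
  by (simp add: field_simps)

lemma absdiff2: fixes x y z :: real shows "x \<le> z \<Longrightarrow> 0 \<le> y \<Longrightarrow> 0 \<le> x \<Longrightarrow> y \<le> z \<Longrightarrow> \<bar>x - y\<bar> \<le> 2 * z"
  by linarith

lemma ring_aux: fixes a b t :: real shows "2 * a * (t * (b - a)) = t * (2 * a * b - 2 * a\<^sup>2)"
  by (simp add: algebra_simps power2_eq_square)

context cw begin

lemma gg_dev: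
  assumes "valid n s" "n \<ge> 1" "j \<in> {1..K}"
  shows "\<bar>gg j n s - rr j / real n\<bar> \<le> AA * (\<Sum>l\<in>{1..K}. \<bar>Z l n s\<bar>) / (real n)\<^sup>2"
proof -
  define M where "M = (\<Sum>l\<in>{1..K}. \<bar>Z l n s\<bar>)"
  have M0: "M \<ge> 0" unfolding M_def by (simp add: sum_nonneg)
  have n0: "real n > 0" using assms by simp
  have t: "\<bar>1 / Sw n s i - 1 / (real n * sb i)\<bar> \<le> wmax * M / (real n * wmin)\<^sup>2" if i: "i \<in> {1..K}" for i
  proof -
    have x: "Sw n s i \<ge> real n * wmin" by (rule Sw_lower[OF assms(1) i])
    have y: "real n * sb i \<ge> real n * wmin" using sb_bounds(1)[OF i] n0 by simp
    have nw: "real n * wmin > 0" using n0 wmin_pos by simp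
    have xp: "Sw n s i > 0" using x nw by linarith
    have yp: "real n * sb i > 0" using y nw by linarith
    have "1 / Sw n s i - 1 / (real n * sb i) = (real n * sb i - Sw n s i) / (Sw n s i * (real n * sb i))"
      using xp yp n0 by (intro inv_diff) auto
    then have "\<bar>1 / Sw n s i - 1 / (real n * sb i)\<bar> = \<bar>real n * sb i - Sw n s i\<bar> / \<bar>Sw n s i * (real n * sb i)\<bar>"
      by (simp only: abs_divide)
    also have "\<dots> = \<bar>Sw n s i - real n * sb i\<bar> / (Sw n s i * (real n * sb i))"
    proof -
      have "\<bar>Sw n s i * (real n * sb i)\<bar> = Sw n s i * (real n * sb i)" using xp yp by simp
      then show ?thesis by (subst abs_minus_commute) (rule arg_cong[where f="\<lambda>z. _ / z"])
    qed
    also have "\<dots> \<le> wmax * M / ((real n * wmin) * (real n * wmin))"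
    proof (rule frac_le)
      show "0 \<le> wmax * M" using M0 wmin_pos wmin_le_wmax by simp
      show "\<bar>Sw n s i - real n * sb i\<bar> \<le> wmax * M" unfolding M_def by (rule Sw_dev[OF assms(1) i])
      show "0 < real n * wmin * (real n * wmin)" using nw by simp
      show "real n * wmin * (real n * wmin) \<le> Sw n s i * (real n * sb i)"
        using xp nw by (intro mult_mono[OF x y]) auto
    qed
    finally show ?thesis by (simp add: power2_eq_square)
  qed
  have eq: "gg j n s - rr j / real n = (\<Sum>i\<in>{1..K}. p i * w i j * (1 / Sw n s i - 1 / (real n * sb i)))"
  proof -
    have "gg j n s - rr j / real n = (\<Sum>i\<in>{1..K}. p i * w i j / Sw n s i) - (\<Sum>i\<in>{1..K}. p i * w i j / sb i / real n)"
      unfolding gg_def rr_eq sum_divide_distrib ..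
    also have "\<dots> = (\<Sum>i\<in>{1..K}. p i * w i j / Sw n s i - p i * w i j / sb i / real n)"
      by (rule sum_subtractf[symmetric])
    also have "\<dots> = (\<Sum>i\<in>{1..K}. p i * w i j * (1 / Sw n s i - 1 / (real n * sb i)))"
      by (intro sum.cong refl) (simp only: right_diff_distrib divide_divide_eq_left times_divide_eq_right mult_1_right mult.commute[of "sb _" "real n"])
    finally show ?thesis .
  qed
  have "\<bar>gg j n s - rr j / real n\<bar> \<le> (\<Sum>i\<in>{1..K}. \<bar>p i * w i j * (1 / Sw n s i - 1 / (real n * sb i))\<bar>)"
    unfolding eq by (rule sum_abs)
  also have "\<dots> \<le> (\<Sum>i\<in>{1..K}. p i * (wmax * (wmax * M / (real n * wmin)\<^sup>2)))"
  proof (rule sum_mono)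
    fix i assume i: "i \<in> {1..K}"
    have pi: "p i \<ge> 0" using pnn i by blast
    have wij: "0 < w i j" "w i j \<le> wmax" using wpos i assms(3) w_bounds(2)[OF i assms(3)] by auto
    have "\<bar>p i * w i j * (1 / Sw n s i - 1 / (real n * sb i))\<bar> = p i * (w i j * \<bar>1 / Sw n s i - 1 / (real n * sb i)\<bar>)"
      using pi wij by (simp add: abs_mult)
    also have "\<dots> \<le> p i * (wmax * (wmax * M / (real n * wmin)\<^sup>2))"
      using pi wij t[OF i] by (intro mult_left_mono mult_mono) auto
    finally show "\<bar>p i * w i j * (1 / Sw n s i - 1 / (real n * sb i))\<bar> \<le> p i * (wmax * (wmax * M / (real n * wmin)\<^sup>2))" .
  qed
  also have "\<dots> = wmax * (wmax * M / (real n * wmin)\<^sup>2)"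
    by (simp only: sum_distrib_right[symmetric] psum mult_1_left)
  also have "\<dots> = AA * M / (real n)\<^sup>2"
    unfolding AA_def using wmin_pos n0 by (simp add: power2_eq_square field_simps)
  finally show ?thesis unfolding M_def .
qed

lemma step_Z:
  assumes "valid n s" "n \<ge> 1" "l \<in> {1..K}"
  shows "measure_pmf.expectation (cwrt_step K p w (Suc n) s) (\<lambda>s'. (Z l (Suc n) s')\<^sup>2) \<le> (Z l n s)\<^sup>2 + 4"
proof -
  have pl: "0 \<le> p l" "p l \<le> 1" using pnn assms(3) p_le1[OF assms(3)] by auto
  have B: "\<bar>Z l (Suc n) s'\<bar> \<le> 2 * real (Suc n)" for s'
  proof -
    have f1: "p l * real (Suc n) \<le> real (Suc n)" using pl by (intro mult_left_le_one_le) auto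
    have f2: "0 \<le> p l * real (Suc n)" using pl by simp
    have f3: "real (cnt l (Suc n) s') \<le> real (Suc n)" using cnt_le[of l "Suc n" s'] by simp
    have f4: "0 \<le> real (cnt l (Suc n) s')" "0 \<le> real (Suc n)" by simp_all
    show ?thesis unfolding Z_def by (rule absdiff2[OF f3 f2 f4(1) f1])
  qed
  have near: "\<bar>Z l (Suc n) s' - Z l n s\<bar> \<le> 2" if sin: "s' \<in> set_pmf (cwrt_step K p w (Suc n) s)" for s'
  proof -
    obtain i v where "i \<in> {1..K}" "v \<in> {1..n}" "s' = upd n s i v" using set_step[OF assms(1,2) sin] by blast
    then show ?thesis using pl unfolding Z_def by (simp add: cnt_upd algebra_simps)
  qed
  have E: "measure_pmf.expectation (cwrt_step K p w (Suc n) s) (Z l (Suc n)) = Z l n s"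
  proof -
    have "measure_pmf.expectation (cwrt_step K p w (Suc n) s) (Z l (Suc n))
      = measure_pmf.expectation (cwrt_step K p w (Suc n) s) (\<lambda>s'. real (cnt l (Suc n) s')) - p l * real (Suc n)"
      unfolding Z_def
      using int_bdd[of "\<lambda>x. real (cnt l (Suc n) x)" "real (Suc n)"] cnt_le[of l "Suc n"]
      by (subst Bochner_Integration.integral_diff) (auto simp del: of_nat_Suc)
    then show ?thesis unfolding exp_cnt[OF assms] Z_def by (simp add: algebra_simps)
  qed
  have "measure_pmf.expectation (cwrt_step K p w (Suc n) s) (\<lambda>s'. (Z l (Suc n) s')\<^sup>2)
    \<le> (Z l n s)\<^sup>2 + 2 * Z l n s * (measure_pmf.expectation (cwrt_step K p w (Suc n) s) (Z l (Suc n)) - Z l n s) + 4"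
    by (rule quad[OF B near])
  then show ?thesis using E by simp
qed

lemma step_D:
  assumes "valid n s" "n \<ge> 1" "j \<in> {1..K}"
  shows "measure_pmf.expectation (cwrt_step K p w (Suc n) s) (\<lambda>s'. (D k j (Suc n) s')\<^sup>2)
    \<le> (1 + 1 / (2 * real n)) * (D k j n s)\<^sup>2 + rr j / real n * (Dp k j n s)\<^sup>2
       + 2 * real K * AA\<^sup>2 / real n * (\<Sum>l\<in>{1..K}. (Z l n s)\<^sup>2) + 4"
proof -
  define a where "a = D k j n s"
  define b where "b = Dp k j n s"
  define M where "M = (\<Sum>l\<in>{1..K}. \<bar>Z l n s\<bar>)"
  define \<delta> where "\<delta> = gg j n s - rr j / real n"
  define \<Delta> where "\<Delta> = real (Np k j n s) - real (Nk k j n s)"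
  have n0: "real n > 0" using assms by simp
  have c: "0 \<le> cc k j" "cc k j \<le> 1" using cc_bounds[OF assms(3)] by auto
  have r: "rr j \<ge> 0" using rr_nn[OF assms(3)] .
  have B: "\<bar>D k j (Suc n) s'\<bar> \<le> 2 * real (Suc n)" for s'
  proof -
    have f1: "cc k j * real (Suc n) \<le> real (Suc n)" using c by (intro mult_left_le_one_le) auto
    have f2: "0 \<le> cc k j * real (Suc n)" using c by simp
    have f3: "real (Nk k j (Suc n) s') \<le> real (Suc n)" using Nk_le[of k j "Suc n" s'] by simp
    have f4: "0 \<le> real (Nk k j (Suc n) s')" "0 \<le> real (Suc n)" by simp_all
    show ?thesis unfolding D_def by (rule absdiff2[OF f3 f2 f4(1) f1])
  qed
  have near: "\<bar>D k j (Suc n) s' - a\<bar> \<le> 2" if sin: "s' \<in> set_pmf (cwrt_step K p w (Suc n) s)" for s'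
  proof -
    obtain i v where iv: "i \<in> {1..K}" "v \<in> {1..n}" "s' = upd n s i v" using set_step[OF assms(1,2) sin] by blast
    have "D k j (Suc n) s' - a = (if i = j \<and> k = 0 then 1 else 0)
      - (if fst s v = j \<and> out_degree n s v = k then 1 else 0)
      + (if fst s v = j \<and> Suc (out_degree n s v) = k then 1 else 0) - cc k j"
      unfolding a_def D_def iv(3) Nk_upd[OF assms(1) iv(2)] by (simp add: algebra_simps)
    then show ?thesis using c by (auto split: if_splits)
  qed
  have EX: "measure_pmf.expectation (cwrt_step K p w (Suc n) s) (D k j (Suc n)) - a
     = (if k = 0 then p j else 0) + gg j n s * \<Delta> - cc k j"
  proof -
    have "measure_pmf.expectation (cwrt_step K p w (Suc n) s) (D k j (Suc n))
      = measure_pmf.expectation (cwrt_step K p w (Suc n) s) (\<lambda>s'. real (Nk k j (Suc n) s')) - cc k j * real (Suc n)"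
      unfolding D_def
      using int_bdd[of "\<lambda>x. real (Nk k j (Suc n) x)" "real (Suc n)"] Nk_le[of k j "Suc n"]
      by (subst Bochner_Integration.integral_diff) (auto simp del: of_nat_Suc)
    then show ?thesis unfolding exp_Nk[OF assms] a_def D_def \<Delta>_def by (simp add: algebra_simps)
  qed
  have ident: "(if k = 0 then p j else 0) + gg j n s * \<Delta> - cc k j = rr j / real n * (b - a) + \<Delta> * \<delta>"
  proof -
    have bma: "b - a = \<Delta> - (ccp k j - cc k j) * real n"
      unfolding a_def b_def D_def Dp_def \<Delta>_def by (simp add: algebra_simps)
    have "rr j / real n * (b - a) = rr j / real n * \<Delta> - rr j * (ccp k j - cc k j)"
      using n0 unfolding bma by (simp add: right_diff_distrib)
    then show ?thesis using cc_rec[OF assms(3), of k] unfolding \<delta>_def by (simp add: algebra_simps)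
  qed
  have dl: "\<bar>\<delta>\<bar> \<le> AA * M / (real n)\<^sup>2" unfolding \<delta>_def M_def by (rule gg_dev[OF assms])
  have Dl: "\<bar>\<Delta>\<bar> \<le> real n" unfolding \<Delta>_def using Nk_le[of k j n s] Np_le[of k j n s] by linarith
  have AA0: "AA \<ge> 0" unfolding AA_def by simp
  have i1: "2 * a * (rr j / real n * (b - a)) \<le> rr j / real n * b\<^sup>2"
  proof -
    have "0 \<le> (a - b)\<^sup>2 + a\<^sup>2" by simp
    then have "2 * a * b - 2 * a\<^sup>2 \<le> b\<^sup>2" by (simp add: power2_diff)
    then have "rr j / real n * (2 * a * b - 2 * a\<^sup>2) \<le> rr j / real n * b\<^sup>2"
      using r n0 by (intro mult_left_mono) auto
    moreover have "2 * a * (rr j / real n * (b - a)) = rr j / real n * (2 * a * b - 2 * a\<^sup>2)"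
      by (rule ring_aux)
    ultimately show ?thesis by linarith
  qed
  have i2: "2 * a * (\<Delta> * \<delta>) \<le> 2 * AA * \<bar>a\<bar> * M / real n"
  proof -
    have "2 * a * (\<Delta> * \<delta>) \<le> 2 * \<bar>a\<bar> * (\<bar>\<Delta>\<bar> * \<bar>\<delta>\<bar>)" by (simp add: abs_mult[symmetric] abs_le_iff)
    also have "\<dots> \<le> 2 * \<bar>a\<bar> * (real n * (AA * M / (real n)\<^sup>2))"
      using Dl dl by (intro mult_left_mono mult_mono) auto
    also have "\<dots> = 2 * AA * \<bar>a\<bar> * M / real n" using n0 by (simp add: power2_eq_square field_simps)
    finally show ?thesis .
  qed
  have i3: "2 * AA * \<bar>a\<bar> * M \<le> a\<^sup>2 / 2 + 2 * real K * AA\<^sup>2 * (\<Sum>l\<in>{1..K}. (Z l n s)\<^sup>2)"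
  proof -
    have K0: "(0::real) < 2 * real K" using K2 by simp
    have "2 * AA * \<bar>a\<bar> * M = (\<Sum>l\<in>{1..K}. 2 * \<bar>a\<bar> * (AA * \<bar>Z l n s\<bar>))"
      unfolding M_def by (simp add: sum_distrib_left algebra_simps)
    also have "\<dots> \<le> (\<Sum>l\<in>{1..K}. \<bar>a\<bar>\<^sup>2 / (2 * real K) + 2 * real K * (AA * \<bar>Z l n s\<bar>)\<^sup>2)"
      by (intro sum_mono amgm K0)
    also have "\<dots> = a\<^sup>2 / 2 + 2 * real K * AA\<^sup>2 * (\<Sum>l\<in>{1..K}. (Z l n s)\<^sup>2)"
      using K2 by (simp add: sum.distrib sum_distrib_left power_mult_distrib algebra_simps)
    finally show ?thesis .
  qed
  have "measure_pmf.expectation (cwrt_step K p w (Suc n) s) (\<lambda>s'. (D k j (Suc n) s')\<^sup>2)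
     \<le> a\<^sup>2 + 2 * a * (measure_pmf.expectation (cwrt_step K p w (Suc n) s) (D k j (Suc n)) - a) + 4"
    by (rule quad[OF B near])
  also have "2 * a * (measure_pmf.expectation (cwrt_step K p w (Suc n) s) (D k j (Suc n)) - a)
      = 2 * a * (rr j / real n * (b - a)) + 2 * a * (\<Delta> * \<delta>)"
    unfolding EX ident by (simp add: algebra_simps)
  also have "\<dots> \<le> rr j / real n * b\<^sup>2 + (a\<^sup>2 / 2 + 2 * real K * AA\<^sup>2 * (\<Sum>l\<in>{1..K}. (Z l n s)\<^sup>2)) / real n"
  proof -
    have "2 * AA * \<bar>a\<bar> * M / real n \<le> (a\<^sup>2 / 2 + 2 * real K * AA\<^sup>2 * (\<Sum>l\<in>{1..K}. (Z l n s)\<^sup>2)) / real n"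
      using i3 n0 by (simp add: divide_right_mono)
    then show ?thesis using i1 i2 by linarith
  qed
  finally have fin: "measure_pmf.expectation (cwrt_step K p w (Suc n) s) (\<lambda>s'. (D k j (Suc n) s')\<^sup>2)
     \<le> a\<^sup>2 + (rr j / real n * b\<^sup>2 + (a\<^sup>2 / 2 + 2 * real K * AA\<^sup>2 * (\<Sum>l\<in>{1..K}. (Z l n s)\<^sup>2)) / real n) + 4" by simp
  have e: "(a\<^sup>2 / 2 + 2 * real K * AA\<^sup>2 * (\<Sum>l\<in>{1..K}. (Z l n s)\<^sup>2)) / real n
     = 1 / (2 * real n) * a\<^sup>2 + 2 * real K * AA\<^sup>2 / real n * (\<Sum>l\<in>{1..K}. (Z l n s)\<^sup>2)"
    by (simp add: add_divide_distrib)
  have e2: "(1 + 1 / (2 * real n)) * a\<^sup>2 = a\<^sup>2 + 1 / (2 * real n) * a\<^sup>2" by (simp add: distrib_right)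
  show ?thesis using fin unfolding a_def[symmetric] b_def[symmetric] e e2 by linarith
qed

end

lemma coef_ineq: fixes n :: real assumes "n \<ge> 3"
  shows "n * (1 + 1 / (2 * n)) / (n + 1)\<^sup>2 \<le> (n - 1) / n\<^sup>2"
proof -
  have n0: "n > 0" using assms by simp
  have "(n + 1/2) * n\<^sup>2 \<le> (n - 1) * (n + 1)\<^sup>2"
  proof -
    have "(n - 1) * (n + 1)\<^sup>2 - (n + 1/2) * n\<^sup>2 = ((n - 1)\<^sup>2 - 3) / 2"
      by (simp add: power2_eq_square algebra_simps)
    moreover have "(n - 1)\<^sup>2 \<ge> 2\<^sup>2" using assms by (intro power_mono) auto
    ultimately show ?thesis by simp
  qed
  moreover have "n * (1 + 1 / (2 * n)) = n + 1/2" using n0 by (simp add: field_simps)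
  ultimately show ?thesis using n0
    by (simp add: divide_le_eq le_divide_eq)
qed

lemma det_lemma:
  fixes u v :: "nat \<Rightarrow> real" and r B :: real and nst :: nat
  assumes rec: "\<And>n. n \<ge> nst \<Longrightarrow> u (Suc n) \<le> (1 + 1 / (2 * real n)) * u n + r / real n * v n + B"
    and u0: "\<And>n. 0 \<le> u n" and v0: "\<And>n. 0 \<le> v n" and r0: "r \<ge> 0" and B0: "B \<ge> 0"
    and vlim: "(\<lambda>n. v n / (real n)\<^sup>2) \<longlonglongrightarrow> 0"
  shows "(\<lambda>n. u n / (real n)\<^sup>2) \<longlonglongrightarrow> 0"
proof -
  define N0 where "N0 = max nst 3"
  define y where "y n = (real n - 1) * u n / (real n)\<^sup>2" for n
  define b where "b n = r * (v n / (real n)\<^sup>2) + B / real n" for n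
  have ystep: "y (Suc n) \<le> y n + b n" if n: "n \<ge> N0" for n
  proof -
    have n3: "real n \<ge> 3" using n unfolding N0_def by simp
    have n0': "real n > 0" using n3 by simp
    have r1: "u (Suc n) \<le> (1 + 1 / (2 * real n)) * u n + r / real n * v n + B"
      using rec n unfolding N0_def by simp
    have "y (Suc n) = real n * u (Suc n) / (real n + 1)\<^sup>2" unfolding y_def by simp
    also have "\<dots> \<le> real n * ((1 + 1 / (2 * real n)) * u n + r / real n * v n + B) / (real n + 1)\<^sup>2"
      using r1 n0' by (intro divide_right_mono mult_left_mono) auto
    also have "\<dots> = (real n * (1 + 1 / (2 * real n)) / (real n + 1)\<^sup>2) * u n
        + r * v n / (real n + 1)\<^sup>2 + real n * B / (real n + 1)\<^sup>2"
      using n0' by (simp add: field_simps)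
    also have "\<dots> \<le> ((real n - 1) / (real n)\<^sup>2) * u n + r * v n / (real n)\<^sup>2 + B / real n"
    proof -
      have a1: "(real n * (1 + 1 / (2 * real n)) / (real n + 1)\<^sup>2) * u n \<le> ((real n - 1) / (real n)\<^sup>2) * u n"
        using coef_ineq[OF n3] u0 by (intro mult_right_mono) auto
      have a2: "r * v n / (real n + 1)\<^sup>2 \<le> r * v n / (real n)\<^sup>2"
        using r0 v0[of n] n0' by (intro divide_left_mono mult_nonneg_nonneg) (auto simp: power_mono)
      have a3: "real n * B / (real n + 1)\<^sup>2 \<le> B / real n"
      proof -
        have "real n * B / (real n + 1)\<^sup>2 \<le> real n * B / (real n)\<^sup>2"
          using B0 n0' by (intro divide_left_mono) (auto simp: power_mono)
        also have "\<dots> = B / real n" using n0' by (simp add: power2_eq_square)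
        finally show ?thesis .
      qed
      show ?thesis using a1 a2 a3 by linarith
    qed
    also have "\<dots> = y n + b n" unfolding y_def b_def by (simp add: field_simps)
    finally show ?thesis .
  qed
  have blim: "b \<longlonglongrightarrow> 0"
  proof -
    have "(\<lambda>n. r * (v n / (real n)\<^sup>2) + B * (1 / real n)) \<longlonglongrightarrow> r * 0 + B * 0"
      by (intro tendsto_intros vlim lim_1_over_n)
    then show ?thesis unfolding b_def by simp
  qed
  show ?thesis
  proof (rule order_tendstoI)
    fix e :: real assume "e < 0"
    then show "\<forall>\<^sub>F n in sequentially. e < u n / (real n)\<^sup>2"
      using u0 by (intro always_eventually allI) (metis divide_nonneg_nonneg le_less_trans not_le zero_le_power2)
  next
    fix e :: real assume e: "0 < e"
    obtain N1 where N1: "\<And>m. m \<ge> N1 \<Longrightarrow> \<bar>b m\<bar> < e / 4"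
      using blim e unfolding LIMSEQ_def by (metis dist_real_def diff_zero divide_pos_pos zero_less_numeral)
    define N where "N = max N0 N1"
    have yb: "y n \<le> y N + (real n - real N) * (e / 4)" if "n \<ge> N" for n
      using that
    proof (induction n rule: dec_induct)
      case base then show ?case by simp
    next
      case (step m)
      have "y (Suc m) \<le> y m + b m" using ystep step unfolding N_def by simp
      moreover have "b m \<le> e / 4" using N1[of m] step unfolding N_def by simp
      moreover have "(real (Suc m) - real N) * (e / 4) = (real m - real N) * (e / 4) + e / 4"
        by (simp add: field_simps)
      ultimately show ?case using step.IH by linarith
    qed
    define c where "c = \<bar>y N\<bar>"
    obtain N2 :: nat where N2: "real N2 > 2 * c / e + 1" by (meson reals_Archimedean2)
    show "\<forall>\<^sub>F n in sequentially. u n / (real n)\<^sup>2 < e"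
    proof (rule eventually_sequentiallyI[of "max N (max N2 2)"])
      fix n assume n: "max N (max N2 2) \<le> n"
      have n2: "real n \<ge> 2" using n by simp
      have nN: "n \<ge> N" using n by simp
      have eq: "u n / (real n)\<^sup>2 = y n / (real n - 1)" unfolding y_def using n2 by (simp add: field_simps)
      have "(real n - real N) * (e / 4) \<le> real n * (e / 4)" using e by (intro mult_right_mono) auto
      moreover have "y N \<le> c" unfolding c_def by simp
      ultimately have "y n \<le> c + real n * (e / 4)" using yb[OF nN] by linarith
      then have "y n / (real n - 1) \<le> (c + real n * (e / 4)) / (real n - 1)" using n2 by (intro divide_right_mono) auto
      also have "\<dots> = c / (real n - 1) + (real n / (real n - 1)) * (e / 4)" by (simp add: add_divide_distrib)
      also have "\<dots> < e / 2 + 2 * (e / 4)"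
      proof -
        have "real n - 1 > 2 * c / e" using N2 n by simp
        then have h2: "2 * c < (real n - 1) * e" using e by (simp add: divide_less_eq)
        have d: "real n - 1 > 0" using n2 by simp
        have "e / 2 * (real n - 1) = ((real n - 1) * e) / 2" by simp
        then have "c < e / 2 * (real n - 1)" using h2 by linarith
        then have "c / (real n - 1) < e / 2" using d by (simp add: pos_divide_less_eq)
        moreover have "real n / (real n - 1) \<le> 2" using n2 by (simp add: field_simps)
        then have "(real n / (real n - 1)) * (e / 4) \<le> 2 * (e / 4)" using e by (intro mult_right_mono) auto
        ultimately show ?thesis by linarith
      qed
      finally show "u n / (real n)\<^sup>2 < e" unfolding eq by simp
    qed
  qed
qed

context cw begin

definition EE :: "nat \<Rightarrow> (cwrt_state \<Rightarrow> real) \<Rightarrow> real" where "EE n f = measure_pmf.expectation (cwrt K p w n) f"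
definition "uD k j n = EE n (\<lambda>s. (D k j n s)\<^sup>2)"
definition "vD k j n = EE n (\<lambda>s. (Dp k j n s)\<^sup>2)"
definition "uZ l n = EE n (\<lambda>s. (Z l n s)\<^sup>2)"
definition "BB = 2 * (real K)\<^sup>2 * AA\<^sup>2 * ((real K)\<^sup>2 + 4) + 4"

lemma EE_step:
  assumes "n \<ge> K" "\<And>s. \<bar>f s\<bar> \<le> B"
  shows "EE (Suc n) f = EE n (\<lambda>s. measure_pmf.expectation (cwrt_step K p w (Suc n) s) f)"
proof -
  have "cwrt K p w (Suc n) = cwrt K p w n \<bind> cwrt_step K p w (Suc n)" using assms(1) by simp
  then show ?thesis unfolding EE_def using exp_bind_bdd[of f B, OF assms(2)] by simp
qed

lemma EE_mono:
  assumes "n \<ge> K" "\<And>s. valid n s \<Longrightarrow> f s \<le> g s" "\<And>s. \<bar>f s\<bar> \<le> Bf" "\<And>s. \<bar>g s\<bar> \<le> Bg"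
  shows "EE n f \<le> EE n g"
  unfolding EE_def
proof (rule integral_mono_AE[OF int_bdd[of f Bf, OF assms(3)] int_bdd[of g Bg, OF assms(4)]])
  show "AE x in measure_pmf (cwrt K p w n). f x \<le> g x"
    using assms(2) valid_cwrt[OF assms(1)] by (intro AE_pmfI) auto
qed

lemma EE_const: "EE n (\<lambda>s. c) = c" unfolding EE_def by (rule exp_const)

lemma Z_abs: "l \<in> {1..K} \<Longrightarrow> \<bar>Z l n s\<bar> \<le> real n"
proof -
  assume l: "l \<in> {1..K}"
  have "0 \<le> p l * real n" "p l * real n \<le> real n" using pnn l p_le1[OF l] by (auto intro: mult_left_le_one_le)
  moreover have "real (cnt l n s) \<le> real n" using cnt_le by simp
  moreover have "0 \<le> real (cnt l n s)" by simp
  ultimately show ?thesis unfolding Z_def by linarith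
qed

lemma D_abs: "j \<in> {1..K} \<Longrightarrow> \<bar>D k j n s\<bar> \<le> real n"
proof -
  assume j: "j \<in> {1..K}"
  have "0 \<le> cc k j * real n" "cc k j * real n \<le> real n" using cc_bounds[OF j] by (auto intro: mult_left_le_one_le)
  moreover have "real (Nk k j n s) \<le> real n" using Nk_le by simp
  moreover have "0 \<le> real (Nk k j n s)" by simp
  ultimately show ?thesis unfolding D_def by linarith
qed

lemma ccp_bounds: "j \<in> {1..K} \<Longrightarrow> 0 \<le> ccp k j \<and> ccp k j \<le> 1"
  using cc_bounds by (auto simp: ccp_def)

lemma Dp_abs: "j \<in> {1..K} \<Longrightarrow> \<bar>Dp k j n s\<bar> \<le> real n"
proof -
  assume j: "j \<in> {1..K}"
  have "0 \<le> ccp k j * real n" "ccp k j * real n \<le> real n" using ccp_bounds[OF j] by (auto intro: mult_left_le_one_le)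
  moreover have "real (Np k j n s) \<le> real n" using Np_le by simp
  moreover have "0 \<le> real (Np k j n s)" by simp
  ultimately show ?thesis unfolding Dp_def by linarith
qed

lemma sq_abs: fixes x b :: real shows "\<bar>x\<bar> \<le> b \<Longrightarrow> \<bar>x\<^sup>2\<bar> \<le> b\<^sup>2"
proof -
  assume h: "\<bar>x\<bar> \<le> b"
  then have "\<bar>x\<bar> \<le> \<bar>b\<bar>" by simp
  then have "x\<^sup>2 \<le> b\<^sup>2" by (simp add: abs_le_square_iff)
  then show ?thesis by simp
qed

lemma uZ_step: assumes "n \<ge> K" "l \<in> {1..K}" shows "uZ l (Suc n) \<le> uZ l n + 4"
proof -
  have n1: "n \<ge> 1" using assms K2 by simp
  have b1: "\<bar>(Z l (Suc n) s)\<^sup>2\<bar> \<le> (real (Suc n))\<^sup>2" for s by (rule sq_abs[OF Z_abs[OF assms(2)]])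
  have "uZ l (Suc n) = EE n (\<lambda>s. measure_pmf.expectation (cwrt_step K p w (Suc n) s) (\<lambda>s'. (Z l (Suc n) s')\<^sup>2))"
    unfolding uZ_def by (rule EE_step[OF assms(1) b1])
  also have "\<dots> \<le> EE n (\<lambda>s. (Z l n s)\<^sup>2 + 4)"
  proof (rule EE_mono[OF assms(1)])
    show "measure_pmf.expectation (cwrt_step K p w (Suc n) s) (\<lambda>s'. (Z l (Suc n) s')\<^sup>2) \<le> (Z l n s)\<^sup>2 + 4"
      if "valid n s" for s by (rule step_Z[OF that n1 assms(2)])
    show "\<bar>measure_pmf.expectation (cwrt_step K p w (Suc n) s) (\<lambda>s'. (Z l (Suc n) s')\<^sup>2)\<bar> \<le> (real (Suc n))\<^sup>2" for s
      by (rule exp_abs_le[OF b1])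
    show "\<bar>(Z l n s)\<^sup>2 + 4\<bar> \<le> (real n)\<^sup>2 + 4" for s
      using sq_abs[OF Z_abs[OF assms(2)], of n s] by (simp add: abs_le_iff)
  qed
  also have "\<dots> = uZ l n + 4"
  proof -
    have iZ: "integrable (measure_pmf (cwrt K p w n)) (\<lambda>s. (Z l n s)\<^sup>2)"
      by (rule int_bdd[of _ "(real n)\<^sup>2"]) (rule sq_abs[OF Z_abs[OF assms(2)]])
    show ?thesis using iZ unfolding uZ_def EE_def by (subst Bochner_Integration.integral_add) auto
  qed
  finally show ?thesis .
qed

lemma uZ_bound: assumes "n \<ge> K" "l \<in> {1..K}" shows "uZ l n \<le> (real K)\<^sup>2 + 4 * real n"
  using assms(1)
proof (induction n rule: dec_induct)
  case base
  have "uZ l K \<le> EE K (\<lambda>s. (real K)\<^sup>2)"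
    unfolding uZ_def
    using sq_abs[OF Z_abs[OF assms(2)], of K]
    by (intro EE_mono[where Bf="(real K)\<^sup>2" and Bg="(real K)\<^sup>2"]) (auto simp: abs_le_iff)
  then show ?case unfolding EE_const by simp
next
  case (step m)
  then show ?case using uZ_step[OF step(1) assms(2)] by simp
qed

end

lemma abs_le_of_bounds: fixes x b :: real shows "0 \<le> x \<Longrightarrow> x \<le> b \<Longrightarrow> \<bar>x\<bar> \<le> b" by simp

context cw begin

lemma sumZ_le: "(\<Sum>l\<in>{1..K}. (Z l n s)\<^sup>2) \<le> real K * (real n)\<^sup>2"
proof -
  have "(\<Sum>l\<in>{1..K}. (Z l n s)\<^sup>2) \<le> (\<Sum>l\<in>{1..K}. (real n)\<^sup>2)"
  proof (rule sum_mono)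
    fix l assume l: "l \<in> {1..K}"
    show "(Z l n s)\<^sup>2 \<le> (real n)\<^sup>2" using sq_abs[OF Z_abs[OF l]] by simp
  qed
  then show ?thesis by simp
qed

lemma uD_step:
  assumes "n \<ge> K" "j \<in> {1..K}"
  shows "uD k j (Suc n) \<le> (1 + 1 / (2 * real n)) * uD k j n + rr j / real n * vD k j n + BB"
proof -
  have n1: "n \<ge> 1" using assms K2 by simp
  have n0: "real n > 0" using n1 by simp
  define c1 where "c1 = 1 + 1 / (2 * real n)"
  define c2 where "c2 = rr j / real n"
  define c3 where "c3 = 2 * real K * AA\<^sup>2 / real n"
  have c0: "c1 \<ge> 0" "c2 \<ge> 0" "c3 \<ge> 0" unfolding c1_def c2_def c3_def using n0 rr_nn[OF assms(2)] by auto
  define F where "F s = c1 * (D k j n s)\<^sup>2 + c2 * (Dp k j n s)\<^sup>2 + c3 * (\<Sum>l\<in>{1..K}. (Z l n s)\<^sup>2) + 4" for s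
  have b1: "\<bar>(D k j (Suc n) s)\<^sup>2\<bar> \<le> (real (Suc n))\<^sup>2" for s by (rule sq_abs[OF D_abs[OF assms(2)]])
  have bD: "\<bar>(D k j n s)\<^sup>2\<bar> \<le> (real n)\<^sup>2" for s by (rule sq_abs[OF D_abs[OF assms(2)]])
  have bDp: "\<bar>(Dp k j n s)\<^sup>2\<bar> \<le> (real n)\<^sup>2" for s by (rule sq_abs[OF Dp_abs[OF assms(2)]])
  have bZ: "\<bar>(Z l n s)\<^sup>2\<bar> \<le> (real n)\<^sup>2" if "l \<in> {1..K}" for s l by (rule sq_abs[OF Z_abs[OF that]])
  have bF: "\<bar>F s\<bar> \<le> c1 * (real n)\<^sup>2 + c2 * (real n)\<^sup>2 + c3 * (real K * (real n)\<^sup>2) + 4" for s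
  proof (rule abs_le_of_bounds)
    show "0 \<le> F s" unfolding F_def using c0 by (intro add_nonneg_nonneg mult_nonneg_nonneg sum_nonneg) auto
    have "c1 * (D k j n s)\<^sup>2 \<le> c1 * (real n)\<^sup>2" using bD[of s] c0 by (intro mult_left_mono) auto
    moreover have "c2 * (Dp k j n s)\<^sup>2 \<le> c2 * (real n)\<^sup>2" using bDp[of s] c0 by (intro mult_left_mono) auto
    moreover have "c3 * (\<Sum>l\<in>{1..K}. (Z l n s)\<^sup>2) \<le> c3 * (real K * (real n)\<^sup>2)" using sumZ_le c0 by (intro mult_left_mono) auto
    ultimately show "F s \<le> c1 * (real n)\<^sup>2 + c2 * (real n)\<^sup>2 + c3 * (real K * (real n)\<^sup>2) + 4"
      unfolding F_def by linarith
  qed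
  have "uD k j (Suc n) = EE n (\<lambda>s. measure_pmf.expectation (cwrt_step K p w (Suc n) s) (\<lambda>s'. (D k j (Suc n) s')\<^sup>2))"
    unfolding uD_def by (rule EE_step[OF assms(1) b1])
  also have "\<dots> \<le> EE n F"
  proof (rule EE_mono[OF assms(1)])
    show "measure_pmf.expectation (cwrt_step K p w (Suc n) s) (\<lambda>s'. (D k j (Suc n) s')\<^sup>2) \<le> F s"
      if "valid n s" for s unfolding F_def c1_def c2_def c3_def by (rule step_D[OF that n1 assms(2)])
    show "\<bar>measure_pmf.expectation (cwrt_step K p w (Suc n) s) (\<lambda>s'. (D k j (Suc n) s')\<^sup>2)\<bar> \<le> (real (Suc n))\<^sup>2" for s
      by (rule exp_abs_le[OF b1])
    show "\<bar>F s\<bar> \<le> c1 * (real n)\<^sup>2 + c2 * (real n)\<^sup>2 + c3 * (real K * (real n)\<^sup>2) + 4" for s by (rule bF)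
  qed
  also have "EE n F = c1 * uD k j n + c2 * vD k j n + c3 * (\<Sum>l\<in>{1..K}. uZ l n) + 4"
  proof -
    let ?M = "measure_pmf (cwrt K p w n)"
    have iD: "integrable ?M (\<lambda>s. (D k j n s)\<^sup>2)" by (rule int_bdd[OF bD])
    have iDp: "integrable ?M (\<lambda>s. (Dp k j n s)\<^sup>2)" by (rule int_bdd[OF bDp])
    have iZl: "integrable ?M (\<lambda>s. (Z l n s)\<^sup>2)" if "l \<in> {1..K}" for l by (rule int_bdd[OF bZ[OF that]])
    have iZ: "integrable ?M (\<lambda>s. \<Sum>l\<in>{1..K}. (Z l n s)\<^sup>2)" using iZl by (intro Bochner_Integration.integrable_sum) auto
    have sZ: "measure_pmf.expectation (cwrt K p w n) (\<lambda>s. \<Sum>l\<in>{1..K}. (Z l n s)\<^sup>2) = (\<Sum>l\<in>{1..K}. uZ l n)"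
      unfolding uZ_def EE_def using iZl by (intro Bochner_Integration.integral_sum) auto
    have "EE n F = measure_pmf.expectation (cwrt K p w n) (\<lambda>s. c1 * (D k j n s)\<^sup>2 + c2 * (Dp k j n s)\<^sup>2 + c3 * (\<Sum>l\<in>{1..K}. (Z l n s)\<^sup>2)) + 4"
      unfolding EE_def F_def using iD iDp iZ by (subst Bochner_Integration.integral_add) auto
    also have "measure_pmf.expectation (cwrt K p w n) (\<lambda>s. c1 * (D k j n s)\<^sup>2 + c2 * (Dp k j n s)\<^sup>2 + c3 * (\<Sum>l\<in>{1..K}. (Z l n s)\<^sup>2))
       = measure_pmf.expectation (cwrt K p w n) (\<lambda>s. c1 * (D k j n s)\<^sup>2 + c2 * (Dp k j n s)\<^sup>2) + c3 * measure_pmf.expectation (cwrt K p w n) (\<lambda>s. \<Sum>l\<in>{1..K}. (Z l n s)\<^sup>2)"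
      using iD iDp iZ by (subst Bochner_Integration.integral_add) auto
    also have "measure_pmf.expectation (cwrt K p w n) (\<lambda>s. c1 * (D k j n s)\<^sup>2 + c2 * (Dp k j n s)\<^sup>2)
       = c1 * uD k j n + c2 * vD k j n"
      unfolding uD_def vD_def EE_def using iD iDp by (subst Bochner_Integration.integral_add) auto
    finally show ?thesis unfolding sZ .
  qed
  also have "c3 * (\<Sum>l\<in>{1..K}. uZ l n) \<le> BB - 4"
  proof -
    have "(\<Sum>l\<in>{1..K}. uZ l n) \<le> (\<Sum>l\<in>{1..K}. (real K)\<^sup>2 + 4 * real n)"
      using uZ_bound[OF assms(1)] by (intro sum_mono) auto
    also have "\<dots> = real K * ((real K)\<^sup>2 + 4 * real n)" by simp
    finally have s1: "(\<Sum>l\<in>{1..K}. uZ l n) \<le> real K * ((real K)\<^sup>2 + 4 * real n)" .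
    have "c3 * (\<Sum>l\<in>{1..K}. uZ l n) \<le> c3 * (real K * ((real K)\<^sup>2 + 4 * real n))"
      using s1 c0 by (intro mult_left_mono) auto
    also have "\<dots> = 2 * (real K)\<^sup>2 * AA\<^sup>2 * ((real K)\<^sup>2 / real n + 4)"
      unfolding c3_def using n0 by (simp add: field_simps power2_eq_square)
    also have "\<dots> \<le> 2 * (real K)\<^sup>2 * AA\<^sup>2 * ((real K)\<^sup>2 + 4)"
    proof -
      have "(real K)\<^sup>2 * 1 \<le> (real K)\<^sup>2 * real n" using n1 by (intro mult_left_mono) auto
      then have "(real K)\<^sup>2 / real n \<le> (real K)\<^sup>2" using n0 by (simp add: divide_le_eq)
      then show ?thesis by (intro mult_left_mono) auto
    qed
    finally show ?thesis unfolding BB_def by simp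
  qed
  finally show ?thesis unfolding c1_def c2_def by simp
qed

lemma uD_nn: "uD k j n \<ge> 0" unfolding uD_def EE_def by simp
lemma vD_nn: "vD k j n \<ge> 0" unfolding vD_def EE_def by simp

lemma vD_0: "vD 0 j n = 0" unfolding vD_def Dp_def EE_def by (simp add: Np_0 ccp_def)
lemma vD_Suc: "vD (Suc k) j n = uD k j n" unfolding vD_def uD_def Dp_def D_def by (simp add: Np_Suc ccp_def)

lemma uD_lim: "j \<in> {1..K} \<Longrightarrow> (\<lambda>n. uD k j n / (real n)\<^sup>2) \<longlonglongrightarrow> 0"
proof (induction k arbitrary: j)
  case 0
  show ?case
  proof (rule det_lemma[where nst=K and v="vD 0 j" and r="rr j" and B=BB])
    show "uD 0 j (Suc n) \<le> (1 + 1 / (2 * real n)) * uD 0 j n + rr j / real n * vD 0 j n + BB" if "K \<le> n" for n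
      by (rule uD_step[OF that 0])
    show "(\<lambda>n. vD 0 j n / (real n)\<^sup>2) \<longlonglongrightarrow> 0" by (simp add: vD_0)
  qed (auto simp: uD_nn vD_nn rr_nn[OF 0] BB_def)
next
  case (Suc k)
  show ?case
  proof (rule det_lemma[where nst=K and v="vD (Suc k) j" and r="rr j" and B=BB])
    show "uD (Suc k) j (Suc n) \<le> (1 + 1 / (2 * real n)) * uD (Suc k) j n + rr j / real n * vD (Suc k) j n + BB" if "K \<le> n" for n
      by (rule uD_step[OF that Suc.prems])
    show "(\<lambda>n. vD (Suc k) j n / (real n)\<^sup>2) \<longlonglongrightarrow> 0" unfolding vD_Suc by (rule Suc.IH[OF Suc.prems])
  qed (auto simp: uD_nn vD_nn rr_nn[OF Suc.prems] BB_def)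
qed

end

context cw begin

lemma num_deg_split: assumes "valid n s"
  shows "real (num_deg k n s) = (\<Sum>j\<in>{1..K}. real (Nk k j n s))"
proof -
  have "real (num_deg k n s) = (\<Sum>v\<in>{1..n}. if out_degree n s v = k then 1 else 0)"
    unfolding num_deg_def by (rule card_sum) simp
  also have "\<dots> = (\<Sum>j\<in>{1..K}. \<Sum>v\<in>{v\<in>{1..n}. fst s v = j}. if out_degree n s v = k then 1 else 0)"
    using assms by (subst sum.group[symmetric, where g="fst s" and T="{1..K}"]) (auto simp: valid_def)
  also have "\<dots> = (\<Sum>j\<in>{1..K}. real (Nk k j n s))"
  proof (rule sum.cong[OF refl])
    fix j
    have "real (Nk k j n s) = real (card {v\<in>{v\<in>{1..n}. fst s v = j}. out_degree n s v = k})"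
      unfolding Nk_def by (intro arg_cong[where f="\<lambda>A. real (card A)"]) auto
    also have "\<dots> = (\<Sum>v\<in>{v\<in>{1..n}. fst s v = j}. if out_degree n s v = k then 1 else 0)"
      by (rule card_sum) simp
    finally show "(\<Sum>v\<in>{v\<in>{1..n}. fst s v = j}. if out_degree n s v = k then 1 else 0) = real (Nk k j n s)" by simp
  qed
  finally show ?thesis .
qed

lemma c_split: "c_tilde K p w k = (\<Sum>j\<in>{1..K}. cc k j)"
  by (simp add: c_tilde_def cc_def rr_def)

lemma prob_bound:
  assumes "n \<ge> K" "\<epsilon> > 0"
  shows "measure_pmf.prob (cwrt K p w n) {s. \<bar>real (num_deg k n s) / real n - c_tilde K p w k\<bar> > \<epsilon>}
     \<le> real K / \<epsilon>\<^sup>2 * (\<Sum>j\<in>{1..K}. uD k j n / (real n)\<^sup>2)"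
proof -
  have n0: "real n > 0" using assms K2 by simp
  define G where "G s = real K * (\<Sum>j\<in>{1..K}. (D k j n s)\<^sup>2) / (real n)\<^sup>2" for s
  let ?A = "{s. \<bar>real (num_deg k n s) / real n - c_tilde K p w k\<bar> > \<epsilon>}"
  let ?M = "measure_pmf (cwrt K p w n)"
  have sub: "?A \<inter> set_pmf (cwrt K p w n) \<subseteq> {s \<in> space ?M. G s \<ge> \<epsilon>\<^sup>2}"
  proof
    fix s assume s: "s \<in> ?A \<inter> set_pmf (cwrt K p w n)"
    have v: "valid n s" using s valid_cwrt[OF assms(1)] by auto
    have eq: "real (num_deg k n s) / real n - c_tilde K p w k = (\<Sum>j\<in>{1..K}. D k j n s) / real n"
      unfolding num_deg_split[OF v] c_split D_def using n0
      by (simp add: sum_subtractf sum_divide_distrib[symmetric] diff_divide_distrib sum_distrib_right[symmetric])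
    have "\<epsilon>\<^sup>2 < ((\<Sum>j\<in>{1..K}. D k j n s) / real n)\<^sup>2"
    proof -
      have "\<epsilon> < \<bar>(\<Sum>j\<in>{1..K}. D k j n s) / real n\<bar>" using s eq by simp
      then have "\<epsilon>\<^sup>2 < \<bar>(\<Sum>j\<in>{1..K}. D k j n s) / real n\<bar>\<^sup>2" using assms(2) by (intro power_strict_mono) auto
      then show ?thesis by (simp only: power2_abs)
    qed
    also have "\<dots> = (\<Sum>j\<in>{1..K}. D k j n s)\<^sup>2 / (real n)\<^sup>2" by (simp add: power_divide)
    also have "\<dots> \<le> G s" unfolding G_def
      using sum_squared_le_sum_of_squares[of "\<lambda>j. D k j n s" "{1..K}"] n0
      by (intro divide_right_mono) (auto simp: mult.commute)
    finally show "s \<in> {s \<in> space ?M. G s \<ge> \<epsilon>\<^sup>2}" by simp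
  qed
  have bG: "\<bar>G s\<bar> \<le> real K * (real K * (real n)\<^sup>2) / (real n)\<^sup>2" for s
  proof (rule abs_le_of_bounds)
    show "0 \<le> G s" unfolding G_def by (simp add: sum_nonneg)
    have "(\<Sum>j\<in>{1..K}. (D k j n s)\<^sup>2) \<le> (\<Sum>j\<in>{1..K}. (real n)\<^sup>2)"
      using sq_abs[OF D_abs] by (intro sum_mono) (simp add: abs_le_iff)
    then have "(\<Sum>j\<in>{1..K}. (D k j n s)\<^sup>2) \<le> real K * (real n)\<^sup>2" by simp
    then show "G s \<le> real K * (real K * (real n)\<^sup>2) / (real n)\<^sup>2" unfolding G_def
      by (intro divide_right_mono mult_left_mono) auto
  qed
  have iD: "integrable ?M (\<lambda>s. (D k j n s)\<^sup>2)" if "j \<in> {1..K}" for j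
    by (rule int_bdd) (rule sq_abs[OF D_abs[OF that]])
  have EG: "measure_pmf.expectation (cwrt K p w n) G = real K * (\<Sum>j\<in>{1..K}. uD k j n) / (real n)\<^sup>2"
  proof -
    have "measure_pmf.expectation (cwrt K p w n) G
        = real K * measure_pmf.expectation (cwrt K p w n) (\<lambda>s. \<Sum>j\<in>{1..K}. (D k j n s)\<^sup>2) / (real n)\<^sup>2"
      unfolding G_def by simp
    also have "measure_pmf.expectation (cwrt K p w n) (\<lambda>s. \<Sum>j\<in>{1..K}. (D k j n s)\<^sup>2) = (\<Sum>j\<in>{1..K}. uD k j n)"
      unfolding uD_def EE_def using iD by (intro Bochner_Integration.integral_sum) auto
    finally show ?thesis .
  qed
  have "measure_pmf.prob (cwrt K p w n) ?A = measure ?M (?A \<inter> set_pmf (cwrt K p w n))"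
    by (simp add: measure_Int_set_pmf)
  also have "\<dots> \<le> measure ?M {s \<in> space ?M. G s \<ge> \<epsilon>\<^sup>2}"
    using sub by (intro measure_pmf.finite_measure_mono) auto
  also have "\<dots> \<le> measure_pmf.expectation (cwrt K p w n) G / \<epsilon>\<^sup>2"
    using assms(2) bG by (intro integral_Markov_inequality_measure[where A=UNIV] int_bdd AE_pmfI)
      (auto simp: G_def sum_nonneg)
  also have "\<dots> = real K / \<epsilon>\<^sup>2 * (\<Sum>j\<in>{1..K}. uD k j n / (real n)\<^sup>2)"
    unfolding EG by (simp add: sum_divide_distrib[symmetric])
  finally show ?thesis .
qed

lemma final:
  assumes "\<epsilon> > 0"
  shows "(\<lambda>n. measure_pmf.prob (cwrt K p w n) {s. \<bar>real (num_deg k n s) / real n - c_tilde K p w k\<bar> > \<epsilon>}) \<longlonglongrightarrow> 0"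
proof (rule tendsto_sandwich[where f="\<lambda>n. 0" and h="\<lambda>n. real K / \<epsilon>\<^sup>2 * (\<Sum>j\<in>{1..K}. uD k j n / (real n)\<^sup>2)"])
  show "\<forall>\<^sub>F n in sequentially. 0 \<le> measure_pmf.prob (cwrt K p w n) {s. \<bar>real (num_deg k n s) / real n - c_tilde K p w k\<bar> > \<epsilon>}"
    by simp
  show "\<forall>\<^sub>F n in sequentially. measure_pmf.prob (cwrt K p w n) {s. \<bar>real (num_deg k n s) / real n - c_tilde K p w k\<bar> > \<epsilon>}
     \<le> real K / \<epsilon>\<^sup>2 * (\<Sum>j\<in>{1..K}. uD k j n / (real n)\<^sup>2)"
    using prob_bound[OF _ assms] by (intro eventually_sequentiallyI[of K]) auto
  show "(\<lambda>n. 0::real) \<longlonglongrightarrow> 0" by simp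
  have "(\<lambda>n. real K / \<epsilon>\<^sup>2 * (\<Sum>j\<in>{1..K}. uD k j n / (real n)\<^sup>2)) \<longlonglongrightarrow> real K / \<epsilon>\<^sup>2 * (\<Sum>j\<in>{1..K}. 0)"
    using uD_lim by (intro tendsto_intros) auto
  then show "(\<lambda>n. real K / \<epsilon>\<^sup>2 * (\<Sum>j\<in>{1..K}. uD k j n / (real n)\<^sup>2)) \<longlonglongrightarrow> 0" by simp
qed

end

theorem theorem3p8:
  fixes K :: nat and p :: "nat \<Rightarrow> real" and w :: "nat \<Rightarrow> nat \<Rightarrow> real" and k :: nat
  assumes "K \<ge> 2"
    and "\<forall>i\<in>{1..K}. p i \<ge> 0"
    and "(\<Sum>i\<in>{1..K}. p i) = 1"
    and "\<forall>i\<in>{1..K}. p i \<le> p 1"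
    and "p 1 > 0"
    and "\<forall>i\<in>{1..K}. \<forall>j\<in>{1..K}. w i j > 0"
  shows "\<forall>\<epsilon>>0. (\<lambda>n. measure_pmf.prob (cwrt K p w n)
            {s. \<bar>real (num_deg k n s) / real n - c_tilde K p w k\<bar> > \<epsilon>})
          \<longlonglongrightarrow> 0"
proof -
  interpret cw K p w using assms by unfold_locales auto
  show ?thesis using final by blast
qed

end
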